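(* Let $F$ satisfy the standing assumptions below, $\beta\in(0,1)$, $D>0$, $\mu\ge0$, and run the general conversion scheme below with any online learner and any choices of $\mathbf{x}_t$. Let $\mathbf{u}_t:=-D\frac{\sum_{s=1}^t\beta^{t-s}\nabla F(\mathbf{y}_s)}{\|\sum_{s=1}^t\beta^{t-s}\nabla F(\mathbf{y}_s)\|}$, and for $t\in[T]$ let $\mathbf{Y}_t$ equal $\mathbf{y}_s$ with probability $q_{t,s}:=\beta^{t-s}\frac{1-\beta}{1-\beta^t}$ ($s=1,\dots,t$). Then for every $n\in[T]$, $$\mathbb{E}\sum_{t=1}^n\beta^{n-t}\big(F(\mathbf{w}_t)-F(\mathbf{x}_t)\big)\le-D\frac{1-\beta^n}{1-\beta}\,\mathbb{E}\|\mathbb{E}_{\mathbf{Y}_n}\nabla F(\mathbf{Y}_n)\|+\frac{\sigma D}{\sqrt{1-\beta}}+\mathbb{E}[\mathrm{Regret}^\beta_n(\mathbf{u}_n)]+\mathbb{E}\sum_{t=1}^n\beta^{n-t}\Big(-\frac\mu2\|\Delta_t\|^2+\frac\mu2D^2\Big),$$ where $\mathbb{E}_{\mathbf{Y}_n}\nabla F(\mathbf{Y}_n)=\sum_{s=1}^nq_{n,s}\nabla F(\mathbf{y}_s)$.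
   Context: Norms are Euclidean. Standing assumptions: $F:\mathbb{R}^d\to\mathbb{R}$ differentiable; for all $\mathbf{x},\mathbf{w}$, $F(\mathbf{x})-F(\mathbf{w})=\int_0^1\langle\nabla F(\mathbf{w}+t(\mathbf{x}-\mathbf{w})),\mathbf{x}-\mathbf{w}\rangle\,dt$; $\|\nabla F\|\le G$ everywhere. The stochastic gradient oracle at $\mathbf{x}$ independently returns $\mathbf{g}$ with $\mathbb{E}\mathbf{g}=\nabla F(\mathbf{x})$, $\mathbb{E}\|\mathbf{g}-\nabla F(\mathbf{x})\|^2\le\sigma^2$. General conversion scheme: input $\mathbf{x}_0=\mathbf{w}_0$, $T$, $\mu\ge0$, online learner $\mathcal{A}$ (output $\Delta_t$ at round $t$ based on $\ell_1,\dots,\ell_{t-1}$). For $t=1,\dots,T$: receive $\Delta_t$; choose $\mathbf{x}_t$ arbitrarily (may depend on everything so far including $\Delta_t$, not on $s_t,\mathbf{g}_t$ or later randomness); $\mathbf{w}_t=\mathbf{x}_t+\Delta_t$; $\mathbf{y}_t=\mathbf{x}_t+s_t\Delta_t$, $s_t\sim\mathrm{Unif}[0,1]$ i.i.d.; $\mathbf{g}_t$ = oracle output at $\mathbf{y}_t$; send $\ell_t(\mathbf{v})=\langle\mathbf{g}_t,\mathbf{v}\rangle+\frac\mu2\|\mathbf{v}\|^2$ to $\mathcal{A}$. $\mathrm{Regret}^\beta_n(\mathbf{u}) := \sum_{t=1}^n\beta^{n-t}(\ell_t(\Delta_t)-\ell_t(\mathbf{u}))$. *)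

theory Defs
  imports "HOL-Probability.Probability"
begin

text \<open>The randomness of round t is the
  seed pair omega t = (s_t, xi_t): s_t is the uniform scalar, xi_t is the seed fed to the
  stochastic oracle Orc (so the oracle output at y is Orc y xi_t). The learner A maps the list
  of losses [l_1,...,l_(t-1)] to Delta_t; X t omega is the (arbitrary) choice of x_t.\<close>

fun conv_losses ::
  "(('a::euclidean_space \<Rightarrow> real) list \<Rightarrow> 'a) \<Rightarrow> (nat \<Rightarrow> (nat \<Rightarrow> real \<times> 'b) \<Rightarrow> 'a)
   \<Rightarrow> ('a \<Rightarrow> 'b \<Rightarrow> 'a) \<Rightarrow> real \<Rightarrow> nat \<Rightarrow> (nat \<Rightarrow> real \<times> 'b) \<Rightarrow> ('a \<Rightarrow> real) list" where
  "conv_losses A X Orc \<mu> 0 \<omega> = []"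
| "conv_losses A X Orc \<mu> (Suc n) \<omega> =
     (let L = conv_losses A X Orc \<mu> n \<omega>;
          \<Delta> = A L;
          y = X (Suc n) \<omega> + fst (\<omega> (Suc n)) *\<^sub>R \<Delta>;
          g = Orc y (snd (\<omega> (Suc n)))
      in L @ [\<lambda>v. g \<bullet> v + \<mu> / 2 * (norm v)\<^sup>2])"

definition conv_Delta where
  "conv_Delta A X Orc \<mu> t \<omega> = A (conv_losses A X Orc \<mu> (t - 1) \<omega>)"

definition conv_w where
  "conv_w A X Orc \<mu> t \<omega> = X t \<omega> + conv_Delta A X Orc \<mu> t \<omega>"

definition conv_y where
  "conv_y A X Orc \<mu> t \<omega> = X t \<omega> + fst (\<omega> t) *\<^sub>R conv_Delta A X Orc \<mu> t \<omega>"

definition conv_g where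
  "conv_g A X Orc \<mu> t \<omega> = Orc (conv_y A X Orc \<mu> t \<omega>) (snd (\<omega> t))"

definition conv_loss where
  "conv_loss A X Orc \<mu> t \<omega> v = conv_g A X Orc \<mu> t \<omega> \<bullet> v + \<mu> / 2 * (norm v)\<^sup>2"

definition regret_beta :: "real \<Rightarrow> nat \<Rightarrow> (nat \<Rightarrow> 'a \<Rightarrow> real) \<Rightarrow> (nat \<Rightarrow> 'a) \<Rightarrow> 'a \<Rightarrow> real" where
  "regret_beta \<beta> n loss \<Delta> u = (\<Sum>t=1..n. \<beta> ^ (n - t) * (loss t (\<Delta> t) - loss t u))"

definition qw :: "real \<Rightarrow> nat \<Rightarrow> nat \<Rightarrow> real" where
  "qw \<beta> t s = \<beta> ^ (t - s) * (1 - \<beta>) / (1 - \<beta> ^ t)"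

end

theory Submission
  imports Defs
begin

lemma sq_sum_le: "((a::real) + b)\<^sup>2 \<le> 2 * a\<^sup>2 + 2 * b\<^sup>2"
  using zero_le_power2[of "a - b"] by (simp add: power2_eq_square algebra_simps)

lemma prod_le_sq: "(a::real) * b \<le> a\<^sup>2 + b\<^sup>2"
proof -
  have "2 * (a * b) \<le> a * a + b * b" using zero_le_power2[of "a - b"] by (simp add: power2_eq_square algebra_simps)
  moreover have "0 \<le> a * a" "0 \<le> b * b" by auto
  ultimately show ?thesis unfolding power2_eq_square by linarith
qed

definition sqi :: "'x measure \<Rightarrow> ('x \<Rightarrow> 'a::euclidean_space) \<Rightarrow> bool" where
  "sqi N f \<longleftrightarrow> f \<in> borel_measurable N \<and> integrable N (\<lambda>x. (norm (f x))\<^sup>2)"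

lemma sqi_add:
  assumes "sqi N f" "sqi N g" shows "sqi N (\<lambda>x. f x + g x)"
proof -
  have i: "integrable N (\<lambda>x. 2 * (norm (f x))\<^sup>2 + 2 * (norm (g x))\<^sup>2)"
    using assms unfolding sqi_def by auto
  have "norm ((norm (f x + g x))\<^sup>2) \<le> norm (2 * (norm (f x))\<^sup>2 + 2 * (norm (g x))\<^sup>2)" for x
  proof -
    have "norm (f x + g x) \<le> norm (f x) + norm (g x)" by (rule norm_triangle_ineq)
    then have "(norm (f x + g x))\<^sup>2 \<le> (norm (f x) + norm (g x))\<^sup>2"
      by (simp add: power_mono)
    also have "\<dots> \<le> 2 * (norm (f x))\<^sup>2 + 2 * (norm (g x))\<^sup>2"
      by (rule sq_sum_le)
    finally show ?thesis by simp
  qed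
  then show ?thesis using assms i unfolding sqi_def
    by (auto intro!: Bochner_Integration.integrable_bound[OF i])
qed

lemma sqi_scaleR:
  assumes "sqi N f" shows "sqi N (\<lambda>x. c *\<^sub>R f x)"
  using assms unfolding sqi_def by (auto simp: power_mult_distrib)

lemma sqi_uminus:
  assumes "sqi N f" shows "sqi N (\<lambda>x. - f x)"
  using assms unfolding sqi_def by auto

lemma sqi_diff:
  assumes "sqi N f" "sqi N g" shows "sqi N (\<lambda>x. f x - g x)"
  using sqi_add[OF assms(1) sqi_uminus[OF assms(2)]] by simp

lemma sqi_zero: "sqi N (\<lambda>x. 0)"
  unfolding sqi_def by auto

lemma sqi_sum:
  assumes "\<And>i. i \<in> I \<Longrightarrow> sqi N (f i)" shows "sqi N (\<lambda>x. \<Sum>i\<in>I. f i x)"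
  using assms
proof (induction I rule: infinite_finite_induct)
  case (insert i I)
  then show ?case using sqi_add[of N "f i" "\<lambda>x. \<Sum>i\<in>I. f i x"] by simp
qed (auto simp: sqi_zero)

lemma sqi_bounded:
  assumes "finite_measure N" "f \<in> borel_measurable N" "\<And>x. x \<in> space N \<Longrightarrow> norm (f x) \<le> C"
  shows "sqi N f"
proof -
  interpret finite_measure N by fact
  have "integrable N (\<lambda>x. (norm (f x))\<^sup>2)"
  proof (rule integrable_const_bound[where B="C\<^sup>2"])
    show "AE x in N. norm ((norm (f x))\<^sup>2) \<le> C\<^sup>2"
      using assms(3) by (auto intro!: AE_I2 power_mono)
  qed (use assms in auto)
  then show ?thesis using assms unfolding sqi_def by auto
qed

lemma sqi_inner:
  assumes "sqi N f" "sqi N g" shows "integrable N (\<lambda>x. f x \<bullet> g x)"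
proof -
  have i: "integrable N (\<lambda>x. (norm (f x))\<^sup>2 + (norm (g x))\<^sup>2)"
    using assms unfolding sqi_def by auto
  have "norm (f x \<bullet> g x) \<le> norm ((norm (f x))\<^sup>2 + (norm (g x))\<^sup>2)" for x
  proof -
    have "norm (f x \<bullet> g x) \<le> norm (f x) * norm (g x)" by (simp add: Cauchy_Schwarz_ineq2)
    also have "\<dots> \<le> (norm (f x))\<^sup>2 + (norm (g x))\<^sup>2" by (rule prod_le_sq)
    finally show ?thesis by simp
  qed
  then show ?thesis using assms
    unfolding sqi_def by (auto intro!: Bochner_Integration.integrable_bound[OF i])
qed

lemma sqi_norm:
  assumes "finite_measure N" "sqi N f" shows "integrable N (\<lambda>x. norm (f x))"
proof -
  interpret finite_measure N by fact
  have i: "integrable N (\<lambda>x. 1 + (norm (f x))\<^sup>2)"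
    using assms unfolding sqi_def by auto
  have "norm (norm (f x)) \<le> norm (1 + (norm (f x))\<^sup>2)" for x
    using prod_le_sq[of "norm (f x)" 1] by (simp add: power2_eq_square)
  then show ?thesis using assms
    unfolding sqi_def by (auto intro!: Bochner_Integration.integrable_bound[OF i])
qed

locale cs =
  fixes F :: "'a::euclidean_space \<Rightarrow> real"
    and gradF :: "'a \<Rightarrow> 'a"
    and G \<sigma> \<beta> D \<mu> :: real
    and T :: nat
    and P :: "'b measure"
    and Orc :: "'a \<Rightarrow> 'b \<Rightarrow> 'a"
    and A :: "('a \<Rightarrow> real) list \<Rightarrow> 'a"
    and X :: "nat \<Rightarrow> (nat \<Rightarrow> real \<times> 'b) \<Rightarrow> 'a"
  assumes grad: "\<And>x. (F has_derivative (\<lambda>h. gradF x \<bullet> h)) (at x)"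
    and ftc: "\<And>x w. ((\<lambda>t. gradF (w + t *\<^sub>R (x - w)) \<bullet> (x - w)) has_integral (F x - F w)) {0..1}"
    and bnd: "\<And>x. norm (gradF x) \<le> G"
    and P: "prob_space P"
    and O_meas: "(\<lambda>(x, \<xi>). Orc x \<xi>) \<in> borel_measurable (borel \<Otimes>\<^sub>M P)"
    and O_int: "\<And>x. integrable P (Orc x)"
    and O_mean: "\<And>x. (\<integral>\<xi>. Orc x \<xi> \<partial>P) = gradF x"
    and O_var_int: "\<And>x. integrable P (\<lambda>\<xi>. (norm (Orc x \<xi> - gradF x))\<^sup>2)"
    and O_var: "\<And>x. (\<integral>\<xi>. (norm (Orc x \<xi> - gradF x))\<^sup>2 \<partial>P) \<le> \<sigma>\<^sup>2"
    and \<sigma>: "0 \<le> \<sigma>"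
    and \<beta>: "0 < \<beta>" "\<beta> < 1" and D: "0 < D" and \<mu>: "0 \<le> \<mu>"
    and X_meas: "\<And>t. t \<in> {1..T} \<Longrightarrow> X t \<in> borel_measurable (\<Pi>\<^sub>M i\<in>{1..T}. (uniform_measure lborel {0..1::real} \<Otimes>\<^sub>M P))"
    and X_past: "\<And>t w w'. t \<in> {1..T} \<Longrightarrow> w \<in> space (\<Pi>\<^sub>M i\<in>{1..T}. (uniform_measure lborel {0..1::real} \<Otimes>\<^sub>M P)) \<Longrightarrow> w' \<in> space (\<Pi>\<^sub>M i\<in>{1..T}. (uniform_measure lborel {0..1::real} \<Otimes>\<^sub>M P)) \<Longrightarrow>
                   (\<forall>s\<in>{1..<t}. w s = w' s) \<Longrightarrow> X t w = X t w'"
    and Delta_meas: "\<And>t. t \<in> {1..T} \<Longrightarrow> conv_Delta A X Orc \<mu> t \<in> borel_measurable (\<Pi>\<^sub>M i\<in>{1..T}. (uniform_measure lborel {0..1::real} \<Otimes>\<^sub>M P))"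
    and Delta_int: "\<And>t. t \<in> {1..T} \<Longrightarrow> integrable (\<Pi>\<^sub>M i\<in>{1..T}. (uniform_measure lborel {0..1::real} \<Otimes>\<^sub>M P)) (\<lambda>w. (norm (conv_Delta A X Orc \<mu> t w))\<^sup>2)"
begin

abbreviation "U \<equiv> uniform_measure lborel {0..1::real}"
abbreviation "M \<equiv> U \<Otimes>\<^sub>M P"
abbreviation "Om \<equiv> (\<Pi>\<^sub>M i\<in>{1..T}. M)"

lemma U_eq: "U = density lborel (\<lambda>x. ennreal (indicator {0..1::real} x))"
  unfolding uniform_measure_def
  by (auto simp: emeasure_lborel_Icc fun_eq_iff intro!: arg_cong[where f="density lborel"] split: split_indicator)

lemma prob_U: "prob_space U"
  by (rule prob_space_uniform_measure) (auto simp: emeasure_lborel_Icc)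

lemma prob_M: "prob_space M"
  using prob_U P by (simp add: prob_space_pair)

lemma prob_Om: "prob_space Om"
  using prob_M by (intro prob_space_PiM) auto

lemma psf: "product_sigma_finite (\<lambda>i. M)"
  using prob_M unfolding product_sigma_finite_def by (simp add: prob_space_imp_sigma_finite)

lemma pair_UP: "pair_sigma_finite U P"
  using prob_U P unfolding pair_sigma_finite_def by (simp add: prob_space_imp_sigma_finite)

lemma gradF_meas[measurable]: "gradF \<in> borel_measurable borel"
proof -
  interpret sigma_finite_measure P using P by (simp add: prob_space_imp_sigma_finite)
  have "(\<lambda>x. \<integral>\<xi>. Orc x \<xi> \<partial>P) \<in> borel_measurable borel"
    by (rule borel_measurable_lebesgue_integral) (use O_meas in simp)
  then show ?thesis using O_mean by simp
qed

lemma F_meas[measurable]: "F \<in> borel_measurable borel"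
proof -
  have "continuous_on UNIV F"
    using grad by (meson continuous_at_imp_continuous_on has_derivative_continuous)
  then show ?thesis by (rule borel_measurable_continuous_onI)
qed

abbreviation "Dl t w \<equiv> conv_Delta A X Orc \<mu> t w"
abbreviation "yv t w \<equiv> conv_y A X Orc \<mu> t w"
abbreviation "gv t w \<equiv> conv_g A X Orc \<mu> t w"

lemma space_M: "space M = UNIV \<times> space P"
  by (simp add: space_pair_measure)

lemma upd_space: "w \<in> space Om \<Longrightarrow> t \<in> {1..T} \<Longrightarrow> z \<in> space M \<Longrightarrow> w(t := z) \<in> space Om"
  by (auto simp: space_PiM PiE_iff extensional_def)

lemma losses_agree:
  "m \<le> T \<Longrightarrow> w \<in> space Om \<Longrightarrow> w' \<in> space Om \<Longrightarrow> (\<forall>s\<in>{1..m}. w s = w' s) \<Longrightarrow>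
   conv_losses A X Orc \<mu> m w = conv_losses A X Orc \<mu> m w'"
proof (induction m)
  case (Suc m)
  have "X (Suc m) w = X (Suc m) w'"
    using Suc.prems by (intro X_past) auto
  moreover have "conv_losses A X Orc \<mu> m w = conv_losses A X Orc \<mu> m w'"
    using Suc by auto
  moreover have "w (Suc m) = w' (Suc m)" using Suc.prems by auto
  ultimately show ?case by (simp add: Let_def)
qed simp

lemma Delta_agree:
  "t \<in> {1..T} \<Longrightarrow> w \<in> space Om \<Longrightarrow> w' \<in> space Om \<Longrightarrow> (\<forall>s\<in>{1..<t}. w s = w' s) \<Longrightarrow>
   Dl t w = Dl t w'"
  unfolding conv_Delta_def by (subst losses_agree) auto

lemma y_agree:
  "t \<in> {1..T} \<Longrightarrow> w \<in> space Om \<Longrightarrow> w' \<in> space Om \<Longrightarrow> (\<forall>s\<in>{1..<t}. w s = w' s) \<Longrightarrow>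
   fst (w t) = fst (w' t) \<Longrightarrow> yv t w = yv t w'"
  unfolding conv_y_def using Delta_agree[of t w w'] X_past[of t w w'] by simp

lemma g_agree:
  "t \<in> {1..T} \<Longrightarrow> w \<in> space Om \<Longrightarrow> w' \<in> space Om \<Longrightarrow> (\<forall>s\<in>{1..t}. w s = w' s) \<Longrightarrow>
   gv t w = gv t w'"
  unfolding conv_g_def using y_agree[of t w w'] by simp

lemma fst_meas: "t \<in> {1..T} \<Longrightarrow> (\<lambda>w. fst (w t)) \<in> borel_measurable Om"
proof -
  assume t: "t \<in> {1..T}"
  have "(\<lambda>w. fst (w t)) \<in> measurable Om U"
    using measurable_compose[OF measurable_component_singleton[OF t] measurable_fst] by (simp add: comp_def)
  moreover have "measurable Om U = measurable Om borel"
    by (rule measurable_cong_sets) auto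
  ultimately show ?thesis by simp
qed

lemma snd_meas: "t \<in> {1..T} \<Longrightarrow> (\<lambda>w. snd (w t)) \<in> measurable Om P"
  using measurable_compose[OF measurable_component_singleton[of t "{1..T}" "\<lambda>i. M"] measurable_snd] by (simp add: comp_def)

lemma X_meas': "t \<in> {1..T} \<Longrightarrow> X t \<in> borel_measurable Om"
  using X_meas by simp

lemma Delta_meas': "t \<in> {1..T} \<Longrightarrow> (\<lambda>w. Dl t w) \<in> borel_measurable Om"
  using Delta_meas by simp

lemma y_meas: "t \<in> {1..T} \<Longrightarrow> (\<lambda>w. yv t w) \<in> borel_measurable Om"
  unfolding conv_y_def by (intro borel_measurable_add borel_measurable_scaleR X_meas' Delta_meas' fst_meas)

lemma Orc_comp_meas:
  assumes "a \<in> borel_measurable Om" "t \<in> {1..T}"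
  shows "(\<lambda>w. Orc (a w) (snd (w t))) \<in> borel_measurable Om"
proof -
  have "(\<lambda>w. (a w, snd (w t))) \<in> measurable Om (borel \<Otimes>\<^sub>M P)"
    using assms by (intro measurable_Pair snd_meas)
  from measurable_compose[OF this O_meas] show ?thesis by simp
qed

lemma g_meas: "t \<in> {1..T} \<Longrightarrow> (\<lambda>w. gv t w) \<in> borel_measurable Om"
  unfolding conv_g_def using Orc_comp_meas[OF y_meas] by blast

lemma mart:
  assumes t: "t \<in> {1..T}"
    and inv: "\<And>w \<xi>. w \<in> space Om \<Longrightarrow> \<xi> \<in> space P \<Longrightarrow>
        a (w(t := (fst (w t), \<xi>))) = a w \<and> b (w(t := (fst (w t), \<xi>))) = b w"
  shows "(\<integral>w. (Orc (a w) (snd (w t)) - gradF (a w)) \<bullet> b w \<partial>Om) = 0"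
proof (cases "integrable Om (\<lambda>w. (Orc (a w) (snd (w t)) - gradF (a w)) \<bullet> b w)")
  case False
  then show ?thesis by (simp add: not_integrable_integral_eq)
next
  case True
  let ?f = "\<lambda>w. (Orc (a w) (snd (w t)) - gradF (a w)) \<bullet> b w"
  let ?J = "{1..T} - {t}"
  interpret product_sigma_finite "\<lambda>i. M" by (rule psf)
  have I: "insert t ?J = {1..T}" using t by auto
  have "integral\<^sup>L Om ?f = integral\<^sup>L (Pi\<^sub>M (insert t ?J) (\<lambda>i. M)) ?f"
    by (simp only: I)
  also have "\<dots> = (\<integral>x. (\<integral>y. ?f (x(t:=y)) \<partial>M) \<partial>Pi\<^sub>M ?J (\<lambda>i. M))"
    by (rule product_integral_insert) (use True I in auto)
  also have "\<dots> = (\<integral>x. 0 \<partial>Pi\<^sub>M ?J (\<lambda>i. M))"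
  proof (rule Bochner_Integration.integral_cong[OF refl])
    fix x assume x: "x \<in> space (Pi\<^sub>M ?J (\<lambda>i. M))"
    have xs: "x(t := y) \<in> space Om" if "y \<in> space M" for y
      using x that t by (auto simp: space_PiM PiE_iff extensional_def)
    show "(\<integral>y. ?f (x(t:=y)) \<partial>M) = 0"
    proof (cases "integrable M (\<lambda>y. ?f (x(t:=y)))")
      case False
      then show ?thesis by (simp add: not_integrable_integral_eq)
    next
      case True
      interpret pair_sigma_finite U P by (rule pair_UP)
      have "(\<integral>y. ?f (x(t:=y)) \<partial>M) = (\<integral>s. (\<integral>\<xi>. ?f (x(t:=(s,\<xi>))) \<partial>P) \<partial>U)"
        by (rule integral_fst'[OF True, symmetric])
      also have "\<dots> = (\<integral>s. 0 \<partial>U)"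
      proof (rule Bochner_Integration.integral_cong[OF refl])
        fix s assume "s \<in> space U"
        interpret Pp: prob_space P by (rule P)
        obtain \<xi>0 where \<xi>0: "\<xi>0 \<in> space P" using Pp.not_empty by blast
        define w0 where "w0 = x(t := (s, \<xi>0))"
        have w0: "w0 \<in> space Om" unfolding w0_def using xs \<xi>0 by (auto simp: space_M)
        have eq: "(Orc (a (x(t:=(s,\<xi>)))) \<xi> - gradF (a (x(t:=(s,\<xi>))))) \<bullet> b (x(t:=(s,\<xi>))) = (Orc (a w0) \<xi> - gradF (a w0)) \<bullet> b w0" if "\<xi> \<in> space P" for \<xi>
        proof -
          have "x(t:=(s,\<xi>)) = w0(t := (fst (w0 t), \<xi>))" unfolding w0_def by simp
          then show ?thesis using inv[OF w0 that] by simp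
        qed
        have "(\<integral>\<xi>. ?f (x(t:=(s,\<xi>))) \<partial>P) = (\<integral>\<xi>. (Orc (a w0) \<xi> - gradF (a w0)) \<bullet> b w0 \<partial>P)"
          by (rule Bochner_Integration.integral_cong[OF refl]) (simp only: fun_upd_same snd_conv eq)
        also have "\<dots> = (\<integral>\<xi>. (Orc (a w0) \<xi> - gradF (a w0)) \<partial>P) \<bullet> b w0"
          using O_int by (intro integral_inner_left) auto
        also have "(\<integral>\<xi>. (Orc (a w0) \<xi> - gradF (a w0)) \<partial>P) = (\<integral>\<xi>. Orc (a w0) \<xi> \<partial>P) - (\<integral>\<xi>. gradF (a w0) \<partial>P)"
          by (rule Bochner_Integration.integral_diff[OF O_int Pp.integrable_const])
        also have "(\<integral>\<xi>. gradF (a w0) \<partial>P) = gradF (a w0)"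
          using Pp.prob_space by simp
        also have "(\<integral>\<xi>. Orc (a w0) \<xi> \<partial>P) = gradF (a w0)" by (rule O_mean)
        also have "(gradF (a w0) - gradF (a w0)) \<bullet> b w0 = 0" by simp
        finally show "(\<integral>\<xi>. ?f (x(t:=(s,\<xi>))) \<partial>P) = 0" .
      qed
      finally show ?thesis by (simp only: Bochner_Integration.integral_zero)
    qed
  qed
  finally show ?thesis by (simp only: Bochner_Integration.integral_zero)
qed

end

context cs begin

lemma G_nonneg: "0 \<le> G"
  using bnd[of 0] norm_ge_zero order_trans by blast

lemma F_lip: "norm (F x - F w) \<le> G * norm (x - w)"
proof -
  have "norm (F x - F w) \<le> G * norm (x - w) * measure lborel (cbox (0::real) 1)"
  proof (rule has_integral_bound)
    show "((\<lambda>t. gradF (w + t *\<^sub>R (x - w)) \<bullet> (x - w)) has_integral (F x - F w)) (cbox 0 1)"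
      using ftc by simp
    fix t :: real
    have "norm (gradF (w + t *\<^sub>R (x - w)) \<bullet> (x - w)) \<le> norm (gradF (w + t *\<^sub>R (x - w))) * norm (x - w)"
      by (simp add: Cauchy_Schwarz_ineq2)
    also have "\<dots> \<le> G * norm (x - w)" by (intro mult_right_mono bnd) auto
    finally show "norm (gradF (w + t *\<^sub>R (x - w)) \<bullet> (x - w)) \<le> G * norm (x - w)" .
  qed (use G_nonneg in auto)
  then show ?thesis by simp
qed

lemma unif_ftc: "(\<integral>s. gradF (x + s *\<^sub>R d) \<bullet> d \<partial>U) = F (x + d) - F x"
proof -
  let ?phi = "\<lambda>s::real. gradF (x + s *\<^sub>R d) \<bullet> d"
  have pm: "?phi \<in> borel_measurable borel" by measurable
  have pmU: "?phi \<in> borel_measurable U"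
    using pm by (simp add: measurable_cong_sets[OF sets_uniform_measure refl])
  interpret Up: prob_space U by (rule prob_U)
  have iU: "integrable U ?phi"
  proof (rule Up.integrable_const_bound[where B="G * norm d"])
    show "AE s in U. norm (?phi s) \<le> G * norm d"
    proof (rule AE_I2)
      fix s
      have "norm (?phi s) \<le> norm (gradF (x + s *\<^sub>R d)) * norm d" by (simp add: Cauchy_Schwarz_ineq2)
      also have "\<dots> \<le> G * norm d" by (intro mult_right_mono bnd) auto
      finally show "norm (?phi s) \<le> G * norm d" .
    qed
  qed (rule pmU)
  have im: "(\<lambda>s. indicator {0..1::real} s) \<in> borel_measurable lborel" by measurable
  have i2: "integrable lborel (\<lambda>s. indicator {0..1::real} s *\<^sub>R ?phi s)"
    using iU unfolding U_eq
    by (subst (asm) integrable_density) (use pm im in auto)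
  have "(\<integral>s. ?phi s \<partial>U) = (\<integral>s. indicator {0..1::real} s *\<^sub>R ?phi s \<partial>lborel)"
    unfolding U_eq by (rule integral_density) (use pm im in auto)
  moreover have "((\<lambda>s. indicator {0..1::real} s *\<^sub>R ?phi s) has_integral (\<integral>s. indicator {0..1::real} s *\<^sub>R ?phi s \<partial>lborel)) UNIV"
    by (rule has_integral_integral_lborel[OF i2])
  moreover have "((\<lambda>s. indicator {0..1::real} s *\<^sub>R ?phi s) has_integral (F (x + d) - F x)) UNIV"
  proof -
    have e: "(\<lambda>s. indicator {0..1::real} s *\<^sub>R ?phi s) = (\<lambda>s. if s \<in> {0..1} then ?phi s else 0)"
      by (auto simp: indicator_def fun_eq_iff)
    show ?thesis unfolding e has_integral_restrict_UNIV
      using ftc[where x="x + d" and w=x] by simp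
  qed
  ultimately show ?thesis using has_integral_unique by metis
qed

end

context cs begin

lemma var_bound:
  assumes t: "t \<in> {1..T}" and am: "a \<in> borel_measurable Om"
    and inv: "\<And>w \<xi>. w \<in> space Om \<Longrightarrow> \<xi> \<in> space P \<Longrightarrow> a (w(t := (fst (w t), \<xi>))) = a w"
  shows "integrable Om (\<lambda>w. (norm (Orc (a w) (snd (w t)) - gradF (a w)))\<^sup>2)"
    and "(\<integral>w. (norm (Orc (a w) (snd (w t)) - gradF (a w)))\<^sup>2 \<partial>Om) \<le> \<sigma>\<^sup>2"
proof -
  let ?f = "\<lambda>w. (norm (Orc (a w) (snd (w t)) - gradF (a w)))\<^sup>2"
  let ?J = "{1..T} - {t}"
  have m1[measurable]: "(\<lambda>w. Orc (a w) (snd (w t))) \<in> borel_measurable Om"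
    by (rule Orc_comp_meas[OF am t])
  have m2[measurable]: "(\<lambda>w. gradF (a w)) \<in> borel_measurable Om"
    using measurable_compose[OF am gradF_meas] by (simp add: comp_def)
  have fm: "?f \<in> borel_measurable Om" by measurable
  interpret product_sigma_finite "\<lambda>i. M" by (rule psf)
  interpret Pp: prob_space P by (rule P)
  interpret Up: prob_space U by (rule prob_U)
  interpret PJ: prob_space "Pi\<^sub>M ?J (\<lambda>i. M)" using prob_M by (intro prob_space_PiM) auto
  have I: "insert t ?J = {1..T}" using t by auto
  have fm': "(\<lambda>w. ennreal (?f w)) \<in> borel_measurable (Pi\<^sub>M (insert t ?J) (\<lambda>i. M))"
    using fm unfolding I by measurable
  have "(\<integral>\<^sup>+w. ennreal (?f w) \<partial>Om) = (\<integral>\<^sup>+w. ennreal (?f w) \<partial>Pi\<^sub>M (insert t ?J) (\<lambda>i. M))"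
    by (simp only: I)
  also have "\<dots> = (\<integral>\<^sup>+x. (\<integral>\<^sup>+y. ennreal (?f (x(t:=y))) \<partial>M) \<partial>Pi\<^sub>M ?J (\<lambda>i. M))"
    by (rule product_nn_integral_insert[OF _ _ fm']) auto
  also have "\<dots> \<le> (\<integral>\<^sup>+x. ennreal (\<sigma>\<^sup>2) \<partial>Pi\<^sub>M ?J (\<lambda>i. M))"
  proof (rule nn_integral_mono)
    fix x assume x: "x \<in> space (Pi\<^sub>M ?J (\<lambda>i. M))"
    have xs: "x(t := y) \<in> space Om" if "y \<in> space M" for y
      using x that t by (auto simp: space_PiM PiE_iff extensional_def)
    have hm: "(\<lambda>y. ennreal (?f (x(t:=y)))) \<in> borel_measurable M"
      using measurable_compose[OF measurable_component_update[OF x, of t] fm'] by (simp add: comp_def)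
    have "(\<integral>\<^sup>+y. ennreal (?f (x(t:=y))) \<partial>M) = (\<integral>\<^sup>+s. (\<integral>\<^sup>+\<xi>. ennreal (?f (x(t:=(s,\<xi>)))) \<partial>P) \<partial>U)"
      using Pp.nn_integral_fst[OF hm] by simp
    also have "\<dots> \<le> (\<integral>\<^sup>+s. ennreal (\<sigma>\<^sup>2) \<partial>U)"
    proof (rule nn_integral_mono)
      fix s assume "s \<in> space U"
      obtain \<xi>0 where \<xi>0: "\<xi>0 \<in> space P" using Pp.not_empty by blast
      define w0 where "w0 = x(t := (s, \<xi>0))"
      have w0: "w0 \<in> space Om" unfolding w0_def using xs \<xi>0 by (auto simp: space_M)
      have eq: "ennreal ((norm (Orc (a (x(t:=(s,\<xi>)))) \<xi> - gradF (a (x(t:=(s,\<xi>))))))\<^sup>2) = ennreal ((norm (Orc (a w0) \<xi> - gradF (a w0)))\<^sup>2)"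
        if "\<xi> \<in> space P" for \<xi>
      proof -
        have "x(t:=(s,\<xi>)) = w0(t := (fst (w0 t), \<xi>))" unfolding w0_def by simp
        then show ?thesis using inv[OF w0 that] by simp
      qed
      have "(\<integral>\<^sup>+\<xi>. ennreal (?f (x(t:=(s,\<xi>)))) \<partial>P) = (\<integral>\<^sup>+\<xi>. ennreal ((norm (Orc (a w0) \<xi> - gradF (a w0)))\<^sup>2) \<partial>P)"
        by (rule nn_integral_cong) (simp only: fun_upd_same snd_conv eq)
      also have "\<dots> = ennreal (\<integral>\<xi>. (norm (Orc (a w0) \<xi> - gradF (a w0)))\<^sup>2 \<partial>P)"
        by (rule nn_integral_eq_integral[OF O_var_int]) auto
      also have "\<dots> \<le> ennreal (\<sigma>\<^sup>2)"
        using O_var by (rule ennreal_leI)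
      finally show "(\<integral>\<^sup>+\<xi>. ennreal (?f (x(t:=(s,\<xi>)))) \<partial>P) \<le> ennreal (\<sigma>\<^sup>2)" .
    qed
    also have "\<dots> = ennreal (\<sigma>\<^sup>2)"
      using Up.emeasure_space_1 by simp
    finally show "(\<integral>\<^sup>+y. ennreal (?f (x(t:=y))) \<partial>M) \<le> ennreal (\<sigma>\<^sup>2)" .
  qed
  also have "\<dots> = ennreal (\<sigma>\<^sup>2)"
    using PJ.emeasure_space_1 by simp
  finally have nn: "(\<integral>\<^sup>+w. ennreal (?f w) \<partial>Om) \<le> ennreal (\<sigma>\<^sup>2)" .
  show int: "integrable Om ?f"
    by (rule integrableI_nonneg[OF fm]) (use nn in \<open>auto simp: top_unique less_top[symmetric]\<close>)
  have "ennreal (integral\<^sup>L Om ?f) \<le> ennreal (\<sigma>\<^sup>2)"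
    using nn nn_integral_eq_integral[OF int] by simp
  then show "integral\<^sup>L Om ?f \<le> \<sigma>\<^sup>2" by simp
qed

end

context cs begin

lemma Om_fin: "finite_measure Om"
  using prob_Om by (simp add: prob_space_def)

lemma sqD: "t \<in> {1..T} \<Longrightarrow> sqi Om (\<lambda>w. Dl t w)"
  unfolding sqi_def using Delta_meas' Delta_int by auto

lemma sqGy: "t \<in> {1..T} \<Longrightarrow> sqi Om (\<lambda>w. gradF (yv t w))"
  by (rule sqi_bounded[OF Om_fin _ bnd]) (use measurable_compose[OF y_meas gradF_meas] in \<open>simp add: comp_def\<close>)

lemma step_eq:
  assumes t: "t \<in> {1..T}"
  shows "integrable Om (\<lambda>w. F (conv_w A X Orc \<mu> t w) - F (X t w))"
    and "integrable Om (\<lambda>w. gradF (yv t w) \<bullet> Dl t w)"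
    and "(\<integral>w. F (conv_w A X Orc \<mu> t w) - F (X t w) \<partial>Om) = (\<integral>w. gradF (yv t w) \<bullet> Dl t w \<partial>Om)"
proof -
  let ?a = "\<lambda>w. F (conv_w A X Orc \<mu> t w) - F (X t w)"
  let ?b = "\<lambda>w. gradF (yv t w) \<bullet> Dl t w"
  let ?J = "{1..T} - {t}"
  have [measurable]: "X t \<in> borel_measurable Om" "(\<lambda>w. Dl t w) \<in> borel_measurable Om"
    using X_meas'[OF t] Delta_meas'[OF t] by auto
  have am: "?a \<in> borel_measurable Om" unfolding conv_w_def by measurable
  have iD: "integrable Om (\<lambda>w. G * norm (Dl t w))"
    using sqi_norm[OF Om_fin sqD[OF t]] by auto
  show ia: "integrable Om ?a"
  proof (rule Bochner_Integration.integrable_bound[OF iD am])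
    show "AE w in Om. norm (?a w) \<le> norm (G * norm (Dl t w))"
    proof (rule AE_I2)
      fix w
      have "norm (?a w) \<le> G * norm (conv_w A X Orc \<mu> t w - X t w)" by (rule F_lip)
      also have "\<dots> = norm (G * norm (Dl t w))" using G_nonneg by (simp add: conv_w_def)
      finally show "norm (?a w) \<le> norm (G * norm (Dl t w))" .
    qed
  qed
  show ib: "integrable Om ?b"
    by (rule sqi_inner[OF sqGy[OF t] sqD[OF t]])
  interpret product_sigma_finite "\<lambda>i. M" by (rule psf)
  interpret Pp: prob_space P by (rule P)
  interpret Mp: prob_space M by (rule prob_M)
  interpret UP: pair_sigma_finite U P by (rule pair_UP)
  have I: "insert t ?J = {1..T}" using t by auto
  have "integral\<^sup>L Om ?a = integral\<^sup>L (Pi\<^sub>M (insert t ?J) (\<lambda>i. M)) ?a"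
    by (simp only: I)
  also have "\<dots> = (\<integral>x. (\<integral>y. ?a (x(t:=y)) \<partial>M) \<partial>Pi\<^sub>M ?J (\<lambda>i. M))"
    by (rule product_integral_insert) (use ia I in auto)
  also have "\<dots> = (\<integral>x. (\<integral>y. ?b (x(t:=y)) \<partial>M) \<partial>Pi\<^sub>M ?J (\<lambda>i. M))"
  proof (rule Bochner_Integration.integral_cong[OF refl])
    fix x assume x: "x \<in> space (Pi\<^sub>M ?J (\<lambda>i. M))"
    have xs: "x(t := y) \<in> space Om" if "y \<in> space M" for y
      using x that t by (auto simp: space_PiM PiE_iff extensional_def)
    obtain \<xi>0 where \<xi>0: "\<xi>0 \<in> space P" using Pp.not_empty by blast
    define w0 where "w0 = x(t := (0, \<xi>0))"
    have w0: "w0 \<in> space Om" unfolding w0_def using xs \<xi>0 by (auto simp: space_M)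
    define X0 where "X0 = X t w0"
    define D0 where "D0 = Dl t w0"
    have agree: "X t (x(t:=y)) = X0 \<and> Dl t (x(t:=y)) = D0" if y: "y \<in> space M" for y
    proof -
      have ag: "\<forall>s\<in>{1..<t}. (x(t:=y)) s = w0 s" unfolding w0_def by auto
      show ?thesis unfolding X0_def D0_def
        using X_past[OF t xs[OF y] w0 ag] Delta_agree[OF t xs[OF y] w0 ag] by (simp add: fun_upd_def)
    qed
    have "(\<integral>y. ?a (x(t:=y)) \<partial>M) = (\<integral>y. F (X0 + D0) - F X0 \<partial>M)"
      by (rule Bochner_Integration.integral_cong[OF refl]) (simp add: conv_w_def agree)
    also have "\<dots> = F (X0 + D0) - F X0"
      using Mp.prob_space by simp
    also have "\<dots> = (\<integral>s. gradF (X0 + s *\<^sub>R D0) \<bullet> D0 \<partial>U)"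
      by (rule unif_ftc[symmetric])
    also have "\<dots> = (\<integral>s. (\<integral>\<xi>. gradF (X0 + s *\<^sub>R D0) \<bullet> D0 \<partial>P) \<partial>U)"
      using Pp.prob_space by simp
    also have "\<dots> = (\<integral>y. gradF (X0 + fst y *\<^sub>R D0) \<bullet> D0 \<partial>M)"
    proof -
      have m: "(\<lambda>y. gradF (X0 + fst y *\<^sub>R D0) \<bullet> D0) \<in> borel_measurable M"
        by measurable
      have "integrable M (\<lambda>y. gradF (X0 + fst y *\<^sub>R D0) \<bullet> D0)"
      proof (rule Mp.integrable_const_bound[where B="G * norm D0"])
        show "AE y in M. norm (gradF (X0 + fst y *\<^sub>R D0) \<bullet> D0) \<le> G * norm D0"
        proof (rule AE_I2)
          fix y
          have "norm (gradF (X0 + fst y *\<^sub>R D0) \<bullet> D0) \<le> norm (gradF (X0 + fst y *\<^sub>R D0)) * norm D0"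
            by (simp add: Cauchy_Schwarz_ineq2)
          also have "\<dots> \<le> G * norm D0" by (intro mult_right_mono bnd) auto
          finally show "norm (gradF (X0 + fst y *\<^sub>R D0) \<bullet> D0) \<le> G * norm D0" .
        qed
      qed (rule m)
      from UP.integral_fst'[OF this] show ?thesis by simp
    qed
    also have "\<dots> = (\<integral>y. ?b (x(t:=y)) \<partial>M)"
      by (rule Bochner_Integration.integral_cong[OF refl]) (simp add: conv_y_def agree)
    finally show "(\<integral>y. ?a (x(t:=y)) \<partial>M) = (\<integral>y. ?b (x(t:=y)) \<partial>M)" .
  qed
  also have "\<dots> = integral\<^sup>L (Pi\<^sub>M (insert t ?J) (\<lambda>i. M)) ?b"
    by (rule product_integral_insert[symmetric]) (use ib I in auto)
  also have "\<dots> = integral\<^sup>L Om ?b"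
    by (simp only: I)
  finally show "integral\<^sup>L Om ?a = integral\<^sup>L Om ?b" .
qed

end

lemma L1_L2:
  assumes "prob_space N" "sqi N f"
  shows "(\<integral>x. norm (f x) \<partial>N) \<le> sqrt (\<integral>x. (norm (f x))\<^sup>2 \<partial>N)"
proof -
  interpret prob_space N by fact
  have i1: "integrable N (\<lambda>x. norm (f x))"
    by (rule sqi_norm[OF _ assms(2)]) (simp add: finite_measure_axioms)
  have i2: "integrable N (\<lambda>x. (norm (f x))\<^sup>2)" using assms(2) unfolding sqi_def by auto
  have "0 \<le> variance (\<lambda>x. norm (f x))" by (rule variance_positive)
  also have "\<dots> = (\<integral>x. (norm (f x))\<^sup>2 \<partial>N) - (\<integral>x. norm (f x) \<partial>N)\<^sup>2"
    by (rule variance_eq[OF i1 i2])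
  finally show ?thesis by (intro real_le_rsqrt) simp
qed

lemma norm_add_sq: "(norm ((a::'a::real_inner) + b))\<^sup>2 = (norm a)\<^sup>2 + 2 * (a \<bullet> b) + (norm b)\<^sup>2"
  by (simp add: power2_norm_eq_inner inner_add inner_commute algebra_simps)

context cs begin

abbreviation "zt t w \<equiv> gv t w - gradF (yv t w)"

lemma y_inv_snd:
  assumes t: "t \<in> {1..T}" and w: "w \<in> space Om" and \<xi>: "\<xi> \<in> space P"
  shows "yv t (w(t := (fst (w t), \<xi>))) = yv t w"
  by (rule y_agree[OF t upd_space[OF w t] w]) (use \<xi> in \<open>auto simp: space_M\<close>)

lemma z_agree:
  "t \<in> {1..T} \<Longrightarrow> w \<in> space Om \<Longrightarrow> w' \<in> space Om \<Longrightarrow> (\<forall>s\<in>{1..t}. w s = w' s) \<Longrightarrow> zt t w = zt t w'"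
  using g_agree[of t w w'] y_agree[of t w w'] by auto

lemma z_var:
  assumes t: "t \<in> {1..T}"
  shows "sqi Om (zt t)" "(\<integral>w. (norm (zt t w))\<^sup>2 \<partial>Om) \<le> \<sigma>\<^sup>2"
proof -
  note vb = var_bound[OF t y_meas[OF t] y_inv_snd[OF t]]
  have m: "zt t \<in> borel_measurable Om"
    using g_meas[OF t] measurable_compose[OF y_meas[OF t] gradF_meas] by (auto simp: comp_def)
  show "sqi Om (zt t)" unfolding sqi_def using m vb(1) by (simp add: conv_g_def)
  show "(\<integral>w. (norm (zt t w))\<^sup>2 \<partial>Om) \<le> \<sigma>\<^sup>2" using vb(2) by (simp add: conv_g_def)
qed

lemma En_bound:
  fixes c :: "nat \<Rightarrow> real"
  shows "m \<le> T \<Longrightarrow> sqi Om (\<lambda>w. \<Sum>s=1..m. c s *\<^sub>R zt s w) \<and>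
     (\<integral>w. (norm (\<Sum>s=1..m. c s *\<^sub>R zt s w))\<^sup>2 \<partial>Om) \<le> \<sigma>\<^sup>2 * (\<Sum>s=1..m. (c s)\<^sup>2)"
proof (induction m)
  case 0
  then show ?case by (simp add: sqi_zero)
next
  case (Suc m)
  let ?E = "\<lambda>w. \<Sum>s=1..m. c s *\<^sub>R zt s w"
  have t: "Suc m \<in> {1..T}" using Suc.prems by auto
  from Suc have IH: "sqi Om ?E" "(\<integral>w. (norm (?E w))\<^sup>2 \<partial>Om) \<le> \<sigma>\<^sup>2 * (\<Sum>s=1..m. (c s)\<^sup>2)" by auto
  note zv = z_var[OF t]
  have sz: "sqi Om (\<lambda>w. c (Suc m) *\<^sub>R zt (Suc m) w)" by (rule sqi_scaleR[OF zv(1)])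
  have eqE: "(\<lambda>w. \<Sum>s=1..Suc m. c s *\<^sub>R zt s w) = (\<lambda>w. ?E w + c (Suc m) *\<^sub>R zt (Suc m) w)"
    by simp
  have sq: "sqi Om (\<lambda>w. \<Sum>s=1..Suc m. c s *\<^sub>R zt s w)"
    unfolding eqE by (rule sqi_add[OF IH(1) sz])
  have mart0: "(\<integral>w. zt (Suc m) w \<bullet> ?E w \<partial>Om) = 0"
  proof -
    have "(\<integral>w. (Orc (yv (Suc m) w) (snd (w (Suc m))) - gradF (yv (Suc m) w)) \<bullet> ?E w \<partial>Om) = 0"
    proof (rule mart[OF t])
      fix w \<xi> assume w: "w \<in> space Om" and \<xi>: "\<xi> \<in> space P"
      have ws: "w(Suc m := (fst (w (Suc m)), \<xi>)) \<in> space Om"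
        using upd_space[OF w t] \<xi> by (auto simp: space_M)
      have "zt s (w(Suc m := (fst (w (Suc m)), \<xi>))) = zt s w" if s: "s \<in> {1..m}" for s
        by (rule z_agree[OF _ ws w]) (use s Suc.prems in auto)
      then have "?E (w(Suc m := (fst (w (Suc m)), \<xi>))) = ?E w" by (intro sum.cong) auto
      then show "yv (Suc m) (w(Suc m := (fst (w (Suc m)), \<xi>))) = yv (Suc m) w \<and>
                 ?E (w(Suc m := (fst (w (Suc m)), \<xi>))) = ?E w"
        using y_inv_snd[OF t w \<xi>] by simp
    qed
    then show ?thesis by (simp add: conv_g_def)
  qed
  have i1: "integrable Om (\<lambda>w. (norm (?E w))\<^sup>2)" using IH(1) unfolding sqi_def by auto
  have i2: "integrable Om (\<lambda>w. zt (Suc m) w \<bullet> ?E w)" by (rule sqi_inner[OF zv(1) IH(1)])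
  have i3: "integrable Om (\<lambda>w. (norm (zt (Suc m) w))\<^sup>2)" using zv(1) unfolding sqi_def by auto
  have "(\<integral>w. (norm (\<Sum>s=1..Suc m. c s *\<^sub>R zt s w))\<^sup>2 \<partial>Om)
      = (\<integral>w. (norm (?E w))\<^sup>2 + 2 * c (Suc m) * (zt (Suc m) w \<bullet> ?E w) + (c (Suc m))\<^sup>2 * (norm (zt (Suc m) w))\<^sup>2 \<partial>Om)"
    unfolding eqE by (rule Bochner_Integration.integral_cong[OF refl])
      (simp add: norm_add_sq inner_commute power_mult_distrib)
  also have "\<dots> = (\<integral>w. (norm (?E w))\<^sup>2 \<partial>Om) + 2 * c (Suc m) * (\<integral>w. zt (Suc m) w \<bullet> ?E w \<partial>Om)
       + (c (Suc m))\<^sup>2 * (\<integral>w. (norm (zt (Suc m) w))\<^sup>2 \<partial>Om)"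
    using i1 i2 i3 by simp
  also have "\<dots> \<le> \<sigma>\<^sup>2 * (\<Sum>s=1..m. (c s)\<^sup>2) + (c (Suc m))\<^sup>2 * \<sigma>\<^sup>2"
    unfolding mart0 using IH(2) mult_left_mono[OF zv(2) zero_le_power2[of "c (Suc m)"]] by linarith
  also have "\<dots> = \<sigma>\<^sup>2 * (\<Sum>s=1..Suc m. (c s)\<^sup>2)" by (simp add: algebra_simps)
  finally show ?case using sq by simp
qed

lemma geo_bound:
  assumes "0 < \<beta>" "\<beta> < 1"
  shows "(\<Sum>s=1..n. (\<beta> ^ (n - s))\<^sup>2) \<le> 1 / (1 - \<beta>)"
proof -
  have "(\<Sum>s=1..n. (\<beta> ^ (n - s))\<^sup>2) \<le> (\<Sum>s=1..n. \<beta> ^ (n - s))"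
  proof (rule sum_mono)
    fix s
    have "0 \<le> \<beta> ^ (n - s)" "\<beta> ^ (n - s) \<le> 1" using assms by (auto intro: power_le_one)
    then show "(\<beta> ^ (n - s))\<^sup>2 \<le> \<beta> ^ (n - s)" by (simp add: power2_eq_square mult_le_one mult_left_le)
  qed
  also have "(\<Sum>s=1..n. \<beta> ^ (n - s)) = (\<Sum>k<n. \<beta> ^ k)"
    by (rule sum.reindex_bij_witness[of _ "\<lambda>k. n - k" "\<lambda>s. n - s"]) auto
  also have "\<dots> = (1 - \<beta> ^ n) / (1 - \<beta>)" using assms by (simp add: sum_gp_strict)
  also have "\<dots> \<le> 1 / (1 - \<beta>)" using assms by (intro divide_right_mono) auto
  finally show ?thesis .
qed

lemma En_L1:
  assumes n: "n \<le> T"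
  shows "sqi Om (\<lambda>w. \<Sum>s=1..n. \<beta> ^ (n - s) *\<^sub>R zt s w)"
    and "(\<integral>w. norm (\<Sum>s=1..n. \<beta> ^ (n - s) *\<^sub>R zt s w) \<partial>Om) \<le> \<sigma> / sqrt (1 - \<beta>)"
proof -
  note eb = En_bound[of n "\<lambda>s. \<beta> ^ (n - s)", OF n]
  show "sqi Om (\<lambda>w. \<Sum>s=1..n. \<beta> ^ (n - s) *\<^sub>R zt s w)" using eb by simp
  have "(\<integral>w. norm (\<Sum>s=1..n. \<beta> ^ (n - s) *\<^sub>R zt s w) \<partial>Om)
      \<le> sqrt (\<integral>w. (norm (\<Sum>s=1..n. \<beta> ^ (n - s) *\<^sub>R zt s w))\<^sup>2 \<partial>Om)"
    using eb by (intro L1_L2[OF prob_Om]) simp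
  also have "\<dots> \<le> sqrt (\<sigma>\<^sup>2 * (1 / (1 - \<beta>)))"
    using eb geo_bound[OF \<beta>, of n] by (intro real_sqrt_le_mono order_trans[OF conjunct2[OF eb]] mult_left_mono) auto
  also have "\<dots> = \<sigma> / sqrt (1 - \<beta>)" using \<sigma> by (simp add: real_sqrt_mult real_sqrt_divide)
  finally show "(\<integral>w. norm (\<Sum>s=1..n. \<beta> ^ (n - s) *\<^sub>R zt s w) \<partial>Om) \<le> \<sigma> / sqrt (1 - \<beta>)" .
qed

end

lemma pw:
  fixes gy g \<Delta> :: "nat \<Rightarrow> 'a::euclidean_space" and c :: "nat \<Rightarrow> real" and I :: "nat set"
  assumes c: "\<And>t. 0 \<le> c t" and D: "0 < D" and \<mu>: "0 \<le> \<mu>"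
  shows "(\<Sum>t\<in>I. c t * (gy t \<bullet> \<Delta> t)) \<le>
      - D * norm (\<Sum>t\<in>I. c t *\<^sub>R gy t) + D * norm (\<Sum>t\<in>I. c t *\<^sub>R (g t - gy t))
     + (\<Sum>t\<in>I. c t * ((g t \<bullet> \<Delta> t + \<mu> / 2 * (norm (\<Delta> t))\<^sup>2)
          - (g t \<bullet> (- (D / norm (\<Sum>t\<in>I. c t *\<^sub>R gy t)) *\<^sub>R (\<Sum>t\<in>I. c t *\<^sub>R gy t))
             + \<mu> / 2 * (norm (- (D / norm (\<Sum>t\<in>I. c t *\<^sub>R gy t)) *\<^sub>R (\<Sum>t\<in>I. c t *\<^sub>R gy t)))\<^sup>2)))
     + (\<Sum>t\<in>I. c t * (- \<mu> / 2 * (norm (\<Delta> t))\<^sup>2 + \<mu> / 2 * D\<^sup>2))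
     - (\<Sum>t\<in>I. c t * ((g t - gy t) \<bullet> \<Delta> t))"
proof -
  define S where "S = (\<Sum>t\<in>I. c t *\<^sub>R gy t)"
  define E where "E = (\<Sum>t\<in>I. c t *\<^sub>R (g t - gy t))"
  define u where "u = - (D / norm S) *\<^sub>R S"
  have nu: "norm u \<le> D"
    unfolding u_def using D by (cases "S = 0") auto
  have Su: "S \<bullet> u = - D * norm S"
    unfolding u_def using D by (cases "S = 0") (auto simp: power2_norm_eq_inner[symmetric] power2_eq_square)
  have Eu: "E \<bullet> u \<le> D * norm E"
  proof -
    have "norm (E \<bullet> u) \<le> norm E * norm u" by (simp add: Cauchy_Schwarz_ineq2)
    also have "\<dots> \<le> norm E * D" by (intro mult_left_mono nu) auto
    finally show ?thesis by (simp add: abs_le_iff algebra_simps)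
  qed
  have SE: "S + E = (\<Sum>t\<in>I. c t *\<^sub>R g t)"
    unfolding S_def E_def by (simp add: sum.distrib[symmetric] scaleR_diff_right)
  have s4: "(\<Sum>t\<in>I. c t * (g t \<bullet> u)) = S \<bullet> u + E \<bullet> u"
    by (simp add: inner_add_left[symmetric] SE inner_sum_left)
  have s5: "(\<Sum>t\<in>I. c t * (\<mu> / 2 * (norm u)\<^sup>2)) \<le> (\<Sum>t\<in>I. c t * (\<mu> / 2 * D\<^sup>2))"
  proof (rule sum_mono)
    fix t
    have "(norm u)\<^sup>2 \<le> D\<^sup>2" using nu by (intro power_mono) auto
    then show "c t * (\<mu> / 2 * (norm u)\<^sup>2) \<le> c t * (\<mu> / 2 * D\<^sup>2)"
      using c \<mu> by (intro mult_left_mono) auto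
  qed
  have R: "(\<Sum>t\<in>I. c t * ((g t \<bullet> \<Delta> t + \<mu> / 2 * (norm (\<Delta> t))\<^sup>2) - (g t \<bullet> u + \<mu> / 2 * (norm u)\<^sup>2)))
     = (\<Sum>t\<in>I. c t * (g t \<bullet> \<Delta> t)) + (\<Sum>t\<in>I. c t * (\<mu> / 2 * (norm (\<Delta> t))\<^sup>2))
       - (\<Sum>t\<in>I. c t * (g t \<bullet> u)) - (\<Sum>t\<in>I. c t * (\<mu> / 2 * (norm u)\<^sup>2))"
    by (simp add: algebra_simps sum.distrib sum_subtractf)
  have Q: "(\<Sum>t\<in>I. c t * (- \<mu> / 2 * (norm (\<Delta> t))\<^sup>2 + \<mu> / 2 * D\<^sup>2))
     = - (\<Sum>t\<in>I. c t * (\<mu> / 2 * (norm (\<Delta> t))\<^sup>2)) + (\<Sum>t\<in>I. c t * (\<mu> / 2 * D\<^sup>2))"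
    by (simp add: algebra_simps sum.distrib sum_subtractf sum_negf)
  have Z: "(\<Sum>t\<in>I. c t * ((g t - gy t) \<bullet> \<Delta> t)) = (\<Sum>t\<in>I. c t * (g t \<bullet> \<Delta> t)) - (\<Sum>t\<in>I. c t * (gy t \<bullet> \<Delta> t))"
    by (simp add: algebra_simps inner_diff_left sum_subtractf)
  show ?thesis
    unfolding S_def[symmetric] E_def[symmetric] u_def[symmetric] R Q Z
    using s4 s5 Su Eu by linarith
qed

lemma coef_lem: "(a::real) \<noteq> 0 \<Longrightarrow> b \<noteq> 0 \<Longrightarrow> - D * a / b * (b / a * x) = - D * x"
  by (simp add: field_simps)

context cs begin

lemma main:
  assumes n: "n \<in> {1..T}"
  shows
    "(\<integral>\<omega>. (\<Sum>t=1..n. \<beta> ^ (n - t) * (F (conv_w A X Orc \<mu> t \<omega>) - F (X t \<omega>))) \<partial>Om)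
     \<le> - D * (1 - \<beta> ^ n) / (1 - \<beta>) *
          (\<integral>\<omega>. norm (\<Sum>s=1..n. qw \<beta> n s *\<^sub>R gradF (conv_y A X Orc \<mu> s \<omega>)) \<partial>Om)
       + \<sigma> * D / sqrt (1 - \<beta>)
       + (\<integral>\<omega>. regret_beta \<beta> n (\<lambda>t. conv_loss A X Orc \<mu> t \<omega>) (\<lambda>t. conv_Delta A X Orc \<mu> t \<omega>)
               (let S = (\<Sum>s=1..n. \<beta> ^ (n - s) *\<^sub>R gradF (conv_y A X Orc \<mu> s \<omega>))
                in - (D / norm S) *\<^sub>R S) \<partial>Om)
       + (\<integral>\<omega>. (\<Sum>t=1..n. \<beta> ^ (n - t) * (- \<mu> / 2 * (norm (conv_Delta A X Orc \<mu> t \<omega>))\<^sup>2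
                                          + \<mu> / 2 * D\<^sup>2)) \<partial>Om)"
proof -
  interpret Op: prob_space Om by (rule prob_Om)
  have It: "\<And>t. t \<in> {1..n} \<Longrightarrow> t \<in> {1..T}" using n by auto
  have nT: "n \<le> T" using n by auto
  have sqsq: "\<And>f. sqi Om f \<Longrightarrow> integrable Om (\<lambda>w. (norm (f w))\<^sup>2)" unfolding sqi_def by auto
  have sg: "sqi Om (\<lambda>w. gv t w)" if t: "t \<in> {1..T}" for t
    using sqi_add[OF z_var(1)[OF t] sqGy[OF t]] by simp
  define Sf where "Sf w = (\<Sum>t=1..n. \<beta> ^ (n - t) *\<^sub>R gradF (yv t w))" for w
  define Ef where "Ef w = (\<Sum>t=1..n. \<beta> ^ (n - t) *\<^sub>R (gv t w - gradF (yv t w)))" for w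
  define uf where "uf w = - (D / norm (Sf w)) *\<^sub>R Sf w" for w
  define Rf where "Rf w = (\<Sum>t=1..n. \<beta> ^ (n - t) * ((gv t w \<bullet> Dl t w + \<mu> / 2 * (norm (Dl t w))\<^sup>2)
          - (gv t w \<bullet> uf w + \<mu> / 2 * (norm (uf w))\<^sup>2)))" for w
  define Qf where "Qf w = (\<Sum>t=1..n. \<beta> ^ (n - t) * (- \<mu> / 2 * (norm (Dl t w))\<^sup>2 + \<mu> / 2 * D\<^sup>2))" for w
  define Zf where "Zf w = (\<Sum>t=1..n. \<beta> ^ (n - t) * ((gv t w - gradF (yv t w)) \<bullet> Dl t w))" for w
  have sS: "sqi Om Sf"
    unfolding Sf_def by (intro sqi_sum sqi_scaleR sqGy It)
  have sE: "sqi Om Ef" and Ebound: "(\<integral>w. norm (Ef w) \<partial>Om) \<le> \<sigma> / sqrt (1 - \<beta>)"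
    unfolding Ef_def using En_L1[OF nT] by auto
  have Sm[measurable]: "Sf \<in> borel_measurable Om" using sS unfolding sqi_def by auto
  have su: "sqi Om uf"
  proof (rule sqi_bounded[OF Om_fin])
    show "uf \<in> borel_measurable Om" unfolding uf_def by measurable
    fix w show "norm (uf w) \<le> D" unfolding uf_def using D by (cases "Sf w = 0") auto
  qed
  have iS: "integrable Om (\<lambda>w. norm (Sf w))" by (rule sqi_norm[OF Om_fin sS])
  have iE: "integrable Om (\<lambda>w. norm (Ef w))" by (rule sqi_norm[OF Om_fin sE])
  have iR: "integrable Om Rf"
    unfolding Rf_def
  proof (rule Bochner_Integration.integrable_sum)
    fix t assume "t \<in> {1..n}"
    then have t: "t \<in> {1..T}" by (rule It)
    have f1: "integrable Om (\<lambda>w. gv t w \<bullet> Dl t w)" by (rule sqi_inner[OF sg[OF t] sqD[OF t]])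
    have f2: "integrable Om (\<lambda>w. (norm (Dl t w))\<^sup>2)" by (rule sqsq[OF sqD[OF t]])
    have f3: "integrable Om (\<lambda>w. gv t w \<bullet> uf w)" by (rule sqi_inner[OF sg[OF t] su])
    have f4: "integrable Om (\<lambda>w. (norm (uf w))\<^sup>2)" by (rule sqsq[OF su])
    show "integrable Om (\<lambda>w. \<beta> ^ (n - t) * ((gv t w \<bullet> Dl t w + \<mu> / 2 * (norm (Dl t w))\<^sup>2)
          - (gv t w \<bullet> uf w + \<mu> / 2 * (norm (uf w))\<^sup>2)))"
      by (intro integrable_mult_right Bochner_Integration.integrable_diff Bochner_Integration.integrable_add)
         (rule f1 f2 f3 f4)+
  qed
  have iQ: "integrable Om Qf"
    unfolding Qf_def
  proof (rule Bochner_Integration.integrable_sum)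
    fix t assume "t \<in> {1..n}"
    then have t: "t \<in> {1..T}" by (rule It)
    have f2: "integrable Om (\<lambda>w. (norm (Dl t w))\<^sup>2)" by (rule sqsq[OF sqD[OF t]])
    show "integrable Om (\<lambda>w. \<beta> ^ (n - t) * (- \<mu> / 2 * (norm (Dl t w))\<^sup>2 + \<mu> / 2 * D\<^sup>2))"
      by (intro integrable_mult_right Bochner_Integration.integrable_add f2 Op.integrable_const)
  qed
  have iZt: "integrable Om (\<lambda>w. (gv t w - gradF (yv t w)) \<bullet> Dl t w)" if t: "t \<in> {1..T}" for t
    by (rule sqi_inner[OF z_var(1)[OF t] sqD[OF t]])
  have iZ: "integrable Om Zf"
    unfolding Zf_def using iZt It by (intro Bochner_Integration.integrable_sum integrable_mult_right) auto
  have Z0: "(\<integral>w. Zf w \<partial>Om) = 0"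
  proof -
    have "(\<integral>w. Zf w \<partial>Om) = (\<Sum>t=1..n. \<beta> ^ (n - t) * (\<integral>w. (gv t w - gradF (yv t w)) \<bullet> Dl t w \<partial>Om))"
      unfolding Zf_def using iZt It by (subst Bochner_Integration.integral_sum) auto
    also have "\<dots> = 0"
    proof (rule sum.neutral, rule ballI)
      fix t assume "t \<in> {1..n}"
      then have t: "t \<in> {1..T}" by (rule It)
      have "(\<integral>w. (Orc (yv t w) (snd (w t)) - gradF (yv t w)) \<bullet> Dl t w \<partial>Om) = 0"
      proof (rule mart[OF t])
        fix w \<xi> assume w: "w \<in> space Om" and \<xi>: "\<xi> \<in> space P"
        have ws: "w(t := (fst (w t), \<xi>)) \<in> space Om"
          using upd_space[OF w t] \<xi> by (auto simp: space_M)
        show "yv t (w(t := (fst (w t), \<xi>))) = yv t w \<and> Dl t (w(t := (fst (w t), \<xi>))) = Dl t w"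
          using y_inv_snd[OF t w \<xi>] Delta_agree[OF t ws w] by simp
      qed
      then show "\<beta> ^ (n - t) * (\<integral>w. (gv t w - gradF (yv t w)) \<bullet> Dl t w \<partial>Om) = 0"
        by (simp add: conv_g_def)
    qed
    finally show ?thesis .
  qed
  have iA: "integrable Om (\<lambda>w. \<beta> ^ (n - t) * (F (conv_w A X Orc \<mu> t w) - F (X t w)))" if "t \<in> {1..n}" for t
    using step_eq(1)[OF It[OF that]] by simp
  have iB: "integrable Om (\<lambda>w. \<beta> ^ (n - t) * (gradF (yv t w) \<bullet> Dl t w))" if "t \<in> {1..n}" for t
    using step_eq(2)[OF It[OF that]] by simp
  have iBs: "integrable Om (\<lambda>w. \<Sum>t=1..n. \<beta> ^ (n - t) * (gradF (yv t w) \<bullet> Dl t w))"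
    using iB by (intro Bochner_Integration.integrable_sum) auto
  have LHS: "(\<integral>w. (\<Sum>t=1..n. \<beta> ^ (n - t) * (F (conv_w A X Orc \<mu> t w) - F (X t w))) \<partial>Om)
      = (\<integral>w. (\<Sum>t=1..n. \<beta> ^ (n - t) * (gradF (yv t w) \<bullet> Dl t w)) \<partial>Om)"
  proof -
    have "(\<integral>w. (\<Sum>t=1..n. \<beta> ^ (n - t) * (F (conv_w A X Orc \<mu> t w) - F (X t w))) \<partial>Om)
        = (\<Sum>t=1..n. \<beta> ^ (n - t) * (\<integral>w. F (conv_w A X Orc \<mu> t w) - F (X t w) \<partial>Om))"
      using iA by (subst Bochner_Integration.integral_sum) auto
    also have "\<dots> = (\<Sum>t=1..n. \<beta> ^ (n - t) * (\<integral>w. gradF (yv t w) \<bullet> Dl t w \<partial>Om))"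
      using step_eq(3)[OF It] by simp
    also have "\<dots> = (\<integral>w. (\<Sum>t=1..n. \<beta> ^ (n - t) * (gradF (yv t w) \<bullet> Dl t w)) \<partial>Om)"
      using iB by (subst Bochner_Integration.integral_sum) auto
    finally show ?thesis .
  qed
  have pwi: "(\<Sum>t=1..n. \<beta> ^ (n - t) * (gradF (yv t w) \<bullet> Dl t w))
      \<le> - D * norm (Sf w) + D * norm (Ef w) + Rf w + Qf w - Zf w" for w
    unfolding Rf_def uf_def Sf_def Ef_def Qf_def Zf_def
    by (rule pw[where c="\<lambda>t. \<beta> ^ (n - t)" and gy="\<lambda>t. gradF (yv t w)" and g="\<lambda>t. gv t w"
          and \<Delta>="\<lambda>t. Dl t w" and I="{1..n}"]) (use \<beta> D \<mu> in auto)
  have "(\<integral>w. (\<Sum>t=1..n. \<beta> ^ (n - t) * (gradF (yv t w) \<bullet> Dl t w)) \<partial>Om)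
      \<le> (\<integral>w. - D * norm (Sf w) + D * norm (Ef w) + Rf w + Qf w - Zf w \<partial>Om)"
    by (rule integral_mono[OF iBs _ pwi]) (use iS iE iR iQ iZ in auto)
  also have "\<dots> = - D * (\<integral>w. norm (Sf w) \<partial>Om) + D * (\<integral>w. norm (Ef w) \<partial>Om)
      + (\<integral>w. Rf w \<partial>Om) + (\<integral>w. Qf w \<partial>Om) - (\<integral>w. Zf w \<partial>Om)"
    using iS iE iR iQ iZ by simp
  finally have m0: "(\<integral>w. (\<Sum>t=1..n. \<beta> ^ (n - t) * (gradF (yv t w) \<bullet> Dl t w)) \<partial>Om)
      \<le> - D * (\<integral>w. norm (Sf w) \<partial>Om) + D * (\<integral>w. norm (Ef w) \<partial>Om)
      + (\<integral>w. Rf w \<partial>Om) + (\<integral>w. Qf w \<partial>Om) - (\<integral>w. Zf w \<partial>Om)" .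
  have e0: "D * (\<integral>w. norm (Ef w) \<partial>Om) \<le> D * (\<sigma> / sqrt (1 - \<beta>))"
    using mult_left_mono[OF Ebound, of D] D by simp
  have e1: "D * (\<sigma> / sqrt (1 - \<beta>)) = \<sigma> * D / sqrt (1 - \<beta>)" by (simp add: mult.commute)
  have main1: "(\<integral>w. (\<Sum>t=1..n. \<beta> ^ (n - t) * (gradF (yv t w) \<bullet> Dl t w)) \<partial>Om)
      \<le> - D * (\<integral>w. norm (Sf w) \<partial>Om) + \<sigma> * D / sqrt (1 - \<beta>) + (\<integral>w. Rf w \<partial>Om) + (\<integral>w. Qf w \<partial>Om)"
    using m0 Z0 e0 e1 by linarith
  have bn: "0 < 1 - \<beta> ^ n" using \<beta> n by (simp add: power_less_one_iff)
  have qweq: "(\<Sum>s=1..n. qw \<beta> n s *\<^sub>R gradF (yv s w)) = ((1 - \<beta>) / (1 - \<beta> ^ n)) *\<^sub>R Sf w" for w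
    unfolding Sf_def qw_def by (simp add: scaleR_sum_right mult.commute)
  have qn: "(\<integral>w. norm (\<Sum>s=1..n. qw \<beta> n s *\<^sub>R gradF (yv s w)) \<partial>Om) = ((1 - \<beta>) / (1 - \<beta> ^ n)) * (\<integral>w. norm (Sf w) \<partial>Om)"
    unfolding qweq using \<beta> bn by simp
  have coef: "- D * (1 - \<beta> ^ n) / (1 - \<beta>) * (((1 - \<beta>) / (1 - \<beta> ^ n)) * (\<integral>w. norm (Sf w) \<partial>Om))
      = - D * (\<integral>w. norm (Sf w) \<partial>Om)"
    by (rule coef_lem) (use \<beta> bn in auto)
  have Req: "regret_beta \<beta> n (\<lambda>t. conv_loss A X Orc \<mu> t w) (\<lambda>t. conv_Delta A X Orc \<mu> t w)
               (let S = (\<Sum>s=1..n. \<beta> ^ (n - s) *\<^sub>R gradF (conv_y A X Orc \<mu> s w))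
                in - (D / norm S) *\<^sub>R S) = Rf w" for w
    unfolding regret_beta_def conv_loss_def Let_def Rf_def uf_def Sf_def by simp
  show ?thesis
    unfolding LHS qn coef Req Qf_def[symmetric]
    using main1 by simp
qed

end

theorem lemma5:
  fixes F :: "'a::euclidean_space \<Rightarrow> real"
    and gradF :: "'a \<Rightarrow> 'a"
    and G \<sigma> \<beta> D \<mu> :: real
    and T n :: nat
    and P :: "'b measure"
    and Orc :: "'a \<Rightarrow> 'b \<Rightarrow> 'a"
    and A :: "('a \<Rightarrow> real) list \<Rightarrow> 'a"
    and X :: "nat \<Rightarrow> (nat \<Rightarrow> real \<times> 'b) \<Rightarrow> 'a"
  defines "\<Omega> \<equiv> (\<Pi>\<^sub>M i\<in>{1..T}. (uniform_measure lborel {0..1::real} \<Otimes>\<^sub>M P))"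
  assumes grad: "\<And>x. (F has_derivative (\<lambda>h. gradF x \<bullet> h)) (at x)"
    and ftc: "\<And>x w. ((\<lambda>t. gradF (w + t *\<^sub>R (x - w)) \<bullet> (x - w)) has_integral (F x - F w)) {0..1}"
    and bnd: "\<And>x. norm (gradF x) \<le> G"
    and P: "prob_space P"
    and O_meas: "(\<lambda>(x, \<xi>). Orc x \<xi>) \<in> borel_measurable (borel \<Otimes>\<^sub>M P)"
    and O_int: "\<And>x. integrable P (Orc x)"
    and O_mean: "\<And>x. (\<integral>\<xi>. Orc x \<xi> \<partial>P) = gradF x"
    and O_var_int: "\<And>x. integrable P (\<lambda>\<xi>. (norm (Orc x \<xi> - gradF x))\<^sup>2)"
    and O_var: "\<And>x. (\<integral>\<xi>. (norm (Orc x \<xi> - gradF x))\<^sup>2 \<partial>P) \<le> \<sigma>\<^sup>2"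
    and \<sigma>: "0 \<le> \<sigma>"
    and \<beta>: "0 < \<beta>" "\<beta> < 1" and D: "0 < D" and \<mu>: "0 \<le> \<mu>"
    and X_meas: "\<And>t. t \<in> {1..T} \<Longrightarrow> X t \<in> borel_measurable \<Omega>"
    and X_past: "\<And>t \<omega> \<omega>'. t \<in> {1..T} \<Longrightarrow> \<omega> \<in> space \<Omega> \<Longrightarrow> \<omega>' \<in> space \<Omega> \<Longrightarrow>
                   (\<forall>s\<in>{1..<t}. \<omega> s = \<omega>' s) \<Longrightarrow> X t \<omega> = X t \<omega>'"
    and Delta_meas: "\<And>t. t \<in> {1..T} \<Longrightarrow> conv_Delta A X Orc \<mu> t \<in> borel_measurable \<Omega>"
    and Delta_int: "\<And>t. t \<in> {1..T} \<Longrightarrow> integrable \<Omega> (\<lambda>\<omega>. (norm (conv_Delta A X Orc \<mu> t \<omega>))\<^sup>2)"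
    and n: "n \<in> {1..T}"
  shows
    "(\<integral>\<omega>. (\<Sum>t=1..n. \<beta> ^ (n - t) * (F (conv_w A X Orc \<mu> t \<omega>) - F (X t \<omega>))) \<partial>\<Omega>)
     \<le> - D * (1 - \<beta> ^ n) / (1 - \<beta>) *
          (\<integral>\<omega>. norm (\<Sum>s=1..n. qw \<beta> n s *\<^sub>R gradF (conv_y A X Orc \<mu> s \<omega>)) \<partial>\<Omega>)
       + \<sigma> * D / sqrt (1 - \<beta>)
       + (\<integral>\<omega>. regret_beta \<beta> n (\<lambda>t. conv_loss A X Orc \<mu> t \<omega>) (\<lambda>t. conv_Delta A X Orc \<mu> t \<omega>)
               (let S = (\<Sum>s=1..n. \<beta> ^ (n - s) *\<^sub>R gradF (conv_y A X Orc \<mu> s \<omega>))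
                in - (D / norm S) *\<^sub>R S) \<partial>\<Omega>)
       + (\<integral>\<omega>. (\<Sum>t=1..n. \<beta> ^ (n - t) * (- \<mu> / 2 * (norm (conv_Delta A X Orc \<mu> t \<omega>))\<^sup>2
                                          + \<mu> / 2 * D\<^sup>2)) \<partial>\<Omega>)"
proof -
  interpret cs F gradF G \<sigma> \<beta> D \<mu> T P Orc A X
    by (rule cs.intro[OF grad ftc bnd P O_meas O_int O_mean O_var_int O_var \<sigma> \<beta> D \<mu>
          X_meas[unfolded \<Omega>_def] X_past[unfolded \<Omega>_def] Delta_meas[unfolded \<Omega>_def]
          Delta_int[unfolded \<Omega>_def]])
  show ?thesis unfolding \<Omega>_def by (rule main[OF n])
qed

end
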